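(* Let $A$ be a bounded distributive lattice, $X$ its Priestley space, and $\kappa$ a regular cardinal. Then $A$ is a $\kappa$-frame if and only if ${\sf cl}(U)$ is a clopen upset for each $\kappa$-clopen upset $U$ of $X$.
   Context: $A$ is a $\kappa$-frame if every subset of cardinality $<\kappa$ has a join and each such join $\bigvee S$ is distributive ($a\wedge\bigvee S=\bigvee\{a\wedge s:s\in S\}$ for all $a$). The Priestley space $X$ of $A$ is the set of prime filters ordered by inclusion, with topology generated by $\{\mathfrak s(a)\setminus\mathfrak s(b)\}$, $\mathfrak s(a)=\{x:a\in x\}$. ${\sf cl}$ is topological closure. A $\kappa$-clopen upset is a union of fewer than $\kappa$ clopen upsets. *)

theory Defs
  imports "HOL-Analysis.Analysis"
begin

definition is_join :: "'a::lattice set \<Rightarrow> 'a \<Rightarrow> bool" where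
  "is_join S j \<longleftrightarrow> (\<forall>s\<in>S. s \<le> j) \<and> (\<forall>u. (\<forall>s\<in>S. s \<le> u) \<longrightarrow> j \<le> u)"

definition kappa_frame :: "'b rel \<Rightarrow> 'a::{bounded_lattice,distrib_lattice} itself \<Rightarrow> bool" where
  "kappa_frame \<kappa> _ \<longleftrightarrow>
     (\<forall>S::'a set. (card_of S, \<kappa>) \<in> ordLess \<longrightarrow>
        (\<exists>j. is_join S j) \<and>
        (\<forall>a j. is_join S j \<longrightarrow> is_join ((\<lambda>s. inf a s) ` S) (inf a j)))"

definition is_filter :: "'a::{bounded_lattice,distrib_lattice} set \<Rightarrow> bool" where
  "is_filter F \<longleftrightarrow> F \<noteq> {} \<and> (\<forall>a\<in>F. \<forall>b. a \<le> b \<longrightarrow> b \<in> F) \<and> (\<forall>a\<in>F. \<forall>b\<in>F. inf a b \<in> F)"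

definition prime_filter :: "'a::{bounded_lattice,distrib_lattice} set \<Rightarrow> bool" where
  "prime_filter F \<longleftrightarrow> is_filter F \<and> F \<noteq> UNIV \<and> (\<forall>a b. sup a b \<in> F \<longrightarrow> a \<in> F \<or> b \<in> F)"

definition prime_filters :: "'a::{bounded_lattice,distrib_lattice} set set" where
  "prime_filters = {F. prime_filter F}"

definition stone_map :: "'a::{bounded_lattice,distrib_lattice} \<Rightarrow> 'a set set" ("\<ss>") where
  "\<ss> a = {x \<in> prime_filters. a \<in> x}"

text \<open>Topology of the Priestley space: generated by the sets s(a) - s(b).  Its topspace is the
  set of all prime filters (take a = top, b = bot).  The order is inclusion.\<close>
definition priestley_top :: "'a::{bounded_lattice,distrib_lattice} set topology" where
  "priestley_top = topology_generated_by {\<ss> a - \<ss> b | a b. True}"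

definition is_upset :: "'a::{bounded_lattice,distrib_lattice} set set \<Rightarrow> bool" where
  "is_upset U \<longleftrightarrow> U \<subseteq> prime_filters \<and> (\<forall>x\<in>U. \<forall>y\<in>prime_filters. x \<subseteq> y \<longrightarrow> y \<in> U)"

definition clopen_upset :: "'a::{bounded_lattice,distrib_lattice} set set \<Rightarrow> bool" where
  "clopen_upset U \<longleftrightarrow> openin priestley_top U \<and> closedin priestley_top U \<and> is_upset U"

definition kappa_clopen_upset :: "'b rel \<Rightarrow> 'a::{bounded_lattice,distrib_lattice} set set \<Rightarrow> bool" where
  "kappa_clopen_upset \<kappa> U \<longleftrightarrow>
     (\<exists>\<U>. (card_of \<U>, \<kappa>) \<in> ordLess \<and> (\<forall>V\<in>\<U>. clopen_upset V) \<and> U = \<Union>\<U>)"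

end

theory Submission
  imports Defs
begin


lemma pf_up: "prime_filter x \<Longrightarrow> a \<in> x \<Longrightarrow> a \<le> b \<Longrightarrow> b \<in> x"
  unfolding prime_filter_def is_filter_def by blast
lemma pf_inf: "prime_filter x \<Longrightarrow> inf a b \<in> x \<longleftrightarrow> a \<in> x \<and> b \<in> x"
  unfolding prime_filter_def is_filter_def by (meson inf.cobounded1 inf.cobounded2)
lemma pf_sup: "prime_filter x \<Longrightarrow> sup a b \<in> x \<longleftrightarrow> a \<in> x \<or> b \<in> x"
  unfolding prime_filter_def is_filter_def by (meson sup.cobounded1 sup.cobounded2)
lemma pf_top: "prime_filter x \<Longrightarrow> top \<in> x"
  unfolding prime_filter_def is_filter_def by (meson all_not_in_conv top_greatest)
lemma pf_bot: "prime_filter x \<Longrightarrow> bot \<notin> x"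
  unfolding prime_filter_def is_filter_def by (metis UNIV_eq_I bot_least)

inductive_set meets :: "'a::{bounded_lattice,distrib_lattice} set \<Rightarrow> 'a set" for J where
  mtop: "top \<in> meets J"
| mJ: "b \<in> J \<Longrightarrow> b \<in> meets J"
| minf: "m1 \<in> meets J \<Longrightarrow> m2 \<in> meets J \<Longrightarrow> inf m1 m2 \<in> meets J"

inductive_set joins :: "'a::{bounded_lattice,distrib_lattice} set \<Rightarrow> 'a set" for I where
  jbot: "bot \<in> joins I"
| jI: "a \<in> I \<Longrightarrow> a \<in> joins I"
| jsup: "n1 \<in> joins I \<Longrightarrow> n2 \<in> joins I \<Longrightarrow> sup n1 n2 \<in> joins I"

lemma pft_general:
  fixes J I :: "'a::{bounded_lattice,distrib_lattice} set"
  assumes H: "\<forall>m\<in>meets J. \<forall>n\<in>joins I. \<not> m \<le> n"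
  shows "\<exists>x. prime_filter x \<and> J \<subseteq> x \<and> x \<inter> joins I = {}"
proof -
  define N where "N = joins I"
  define \<A> where "\<A> = {F. is_filter F \<and> J \<subseteq> F \<and> (\<forall>y\<in>F. \<forall>n\<in>N. \<not> y \<le> n)}"
  define F0 where "F0 = {y. \<exists>m\<in>meets J. m \<le> y}"
  have "F0 \<in> \<A>"
    unfolding \<A>_def is_filter_def
  proof (intro CollectI conjI ballI allI impI)
    show "F0 \<noteq> {}" using mtop unfolding F0_def by blast
  next
    fix a b assume "a \<in> F0" "a \<le> b"
    then show "b \<in> F0" unfolding F0_def using order_trans by blast
  next
    fix a b assume "a \<in> F0" "b \<in> F0"
    then obtain m1 m2 where "m1 \<in> meets J" "m2 \<in> meets J" "m1 \<le> a" "m2 \<le> b" unfolding F0_def by blast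
    then show "inf a b \<in> F0" unfolding F0_def
      by (intro CollectI bexI[of _ "inf m1 m2"]) (auto intro: minf le_infI1 le_infI2)
  next
    show "J \<subseteq> F0" using mJ unfolding F0_def by blast
  next
    fix y n assume "y \<in> F0" "n \<in> N"
    then show "\<not> y \<le> n" using H N_def order_trans unfolding F0_def by blast
  qed
  have "\<exists>M\<in>\<A>. \<forall>X\<in>\<A>. M \<subseteq> X \<longrightarrow> X = M"
  proof (rule subset_Zorn_nonempty)
    show "\<A> \<noteq> {}" using \<open>F0 \<in> \<A>\<close> by blast
  next
    fix C assume "C \<noteq> {}" and ch: "subset.chain \<A> C"
    then have CA: "C \<subseteq> \<A>" and cc: "\<forall>X\<in>C. \<forall>Y\<in>C. X \<subseteq> Y \<or> Y \<subseteq> X"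
      by (auto simp: subset.chain_def)
    show "\<Union>C \<in> \<A>"
      unfolding \<A>_def is_filter_def
    proof (intro CollectI conjI ballI allI impI)
      obtain X where "X \<in> C" using \<open>C \<noteq> {}\<close> by blast
      then have "X \<in> \<A>" using CA by blast
      then have "is_filter X" "J \<subseteq> X" unfolding \<A>_def by simp_all
      then have "X \<noteq> {}" unfolding is_filter_def by simp
      then show "\<Union>C \<noteq> {}" using \<open>X \<in> C\<close> by blast
      show "J \<subseteq> \<Union>C" using \<open>J \<subseteq> X\<close> \<open>X \<in> C\<close> by blast
    next
      fix a b assume "a \<in> \<Union>C" "a \<le> b"
      then obtain X where "X \<in> C" "a \<in> X" by blast
      then have "is_filter X" using CA unfolding \<A>_def by blast
      then have "b \<in> X" using \<open>a \<in> X\<close> \<open>a \<le> b\<close> unfolding is_filter_def by blast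
      then show "b \<in> \<Union>C" using \<open>X \<in> C\<close> by blast
    next
      fix a b assume "a \<in> \<Union>C" "b \<in> \<Union>C"
      then obtain X Y where XY: "X \<in> C" "Y \<in> C" "a \<in> X" "b \<in> Y" by blast
      have fX: "is_filter X" and fY: "is_filter Y" using CA XY unfolding \<A>_def by blast+
      show "inf a b \<in> \<Union>C"
      proof (cases "X \<subseteq> Y")
        case True
        then have "a \<in> Y" using XY by blast
        then have "inf a b \<in> Y" using fY XY unfolding is_filter_def by blast
        then show ?thesis using XY by blast
      next
        case False
        then have "Y \<subseteq> X" using cc XY by blast
        then have "b \<in> X" using XY by blast
        then have "inf a b \<in> X" using fX XY unfolding is_filter_def by blast
        then show ?thesis using XY by blast
      qed
    next
      fix y n assume "y \<in> \<Union>C" "n \<in> N"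
      then obtain X where "X \<in> C" "y \<in> X" by blast
      then have "\<forall>y\<in>X. \<forall>n\<in>N. \<not> y \<le> n" using CA unfolding \<A>_def by blast
      then show "\<not> y \<le> n" using \<open>y \<in> X\<close> \<open>n \<in> N\<close> by blast
    qed
  qed
  then obtain F where FA: "F \<in> \<A>" and Fmax: "\<forall>X\<in>\<A>. F \<subseteq> X \<longrightarrow> X = F" by blast
  have filt: "is_filter F" and JF: "J \<subseteq> F" and disj: "\<forall>y\<in>F. \<forall>n\<in>N. \<not> y \<le> n"
    using FA unfolding \<A>_def by simp_all
  have topF: "top \<in> F" using filt unfolding is_filter_def by (meson all_not_in_conv top_greatest)
  have ext: "\<exists>f\<in>F. \<exists>n\<in>N. inf f c \<le> n" if "c \<notin> F" for c
  proof (rule ccontr)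
    assume nex: "\<not> (\<exists>f\<in>F. \<exists>n\<in>N. inf f c \<le> n)"
    define G where "G = {y. \<exists>f\<in>F. inf f c \<le> y}"
    have "G \<in> \<A>"
      unfolding \<A>_def is_filter_def
    proof (intro CollectI conjI ballI allI impI)
      have "inf top c \<le> c" by simp
      then have "c \<in> G" using topF unfolding G_def by blast
      then show "G \<noteq> {}" by blast
    next
      fix a b assume "a \<in> G" "a \<le> b"
      then obtain f where "f \<in> F" "inf f c \<le> a" unfolding G_def by blast
      have "inf f c \<le> b" using \<open>inf f c \<le> a\<close> \<open>a \<le> b\<close> by (rule order_trans)
      then show "b \<in> G" using \<open>f \<in> F\<close> unfolding G_def by blast
    next
      fix a b assume "a \<in> G" "b \<in> G"
      then obtain f1 f2 where "f1 \<in> F" "f2 \<in> F" "inf f1 c \<le> a" "inf f2 c \<le> b" unfolding G_def by blast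
      moreover have "inf f1 f2 \<in> F" using filt \<open>f1 \<in> F\<close> \<open>f2 \<in> F\<close> unfolding is_filter_def by blast
      moreover have "inf (inf f1 f2) c \<le> inf a b"
      proof (rule le_infI)
        have "inf (inf f1 f2) c \<le> inf f1 c" by (rule inf_mono) simp_all
        then show "inf (inf f1 f2) c \<le> a" using \<open>inf f1 c \<le> a\<close> by (rule order_trans)
        have "inf (inf f1 f2) c \<le> inf f2 c" by (rule inf_mono) simp_all
        then show "inf (inf f1 f2) c \<le> b" using \<open>inf f2 c \<le> b\<close> by (rule order_trans)
      qed
      ultimately show "inf a b \<in> G" unfolding G_def by blast
    next
      show "J \<subseteq> G"
      proof
        fix b assume "b \<in> J" then have "b \<in> F" using JF by blast
        moreover have "inf b c \<le> b" by simp
        ultimately show "b \<in> G" unfolding G_def by blast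
      qed
    next
      fix y n assume "y \<in> G" "n \<in> N"
      then obtain f where "f \<in> F" "inf f c \<le> y" unfolding G_def by blast
      show "\<not> y \<le> n"
      proof
        assume "y \<le> n"
        with \<open>inf f c \<le> y\<close> have "inf f c \<le> n" by (rule order_trans)
        then show False using nex \<open>f \<in> F\<close> \<open>n \<in> N\<close> by blast
      qed
    qed
    moreover have "F \<subseteq> G"
    proof
      fix y assume "y \<in> F"
      moreover have "inf y c \<le> y" by simp
      ultimately show "y \<in> G" unfolding G_def by blast
    qed
    moreover have "c \<in> G"
    proof -
      have "inf top c \<le> c" by simp
      then show "c \<in> G" using topF unfolding G_def by blast
    qed
    ultimately show False using Fmax \<open>c \<notin> F\<close> by blast
  qed
  have prime: "c \<in> F \<or> d \<in> F" if "sup c d \<in> F" for c d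
  proof (rule ccontr)
    assume "\<not> (c \<in> F \<or> d \<in> F)"
    then obtain f1 n1 f2 n2 where "f1 \<in> F" "n1 \<in> N" "inf f1 c \<le> n1" "f2 \<in> F" "n2 \<in> N" "inf f2 d \<le> n2"
      using ext by meson
    define f where "f = inf (inf f1 f2) (sup c d)"
    have "f \<in> F" unfolding f_def using filt that \<open>f1 \<in> F\<close> \<open>f2 \<in> F\<close> unfolding is_filter_def by blast
    have "f = sup (inf (inf f1 f2) c) (inf (inf f1 f2) d)" unfolding f_def by (simp add: inf_sup_distrib1)
    also have "\<dots> \<le> sup n1 n2"
    proof (rule sup_mono)
      have "inf (inf f1 f2) c \<le> inf f1 c" by (rule inf_mono) simp_all
      then show "inf (inf f1 f2) c \<le> n1" using \<open>inf f1 c \<le> n1\<close> by (rule order_trans)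
      have "inf (inf f1 f2) d \<le> inf f2 d" by (rule inf_mono) simp_all
      then show "inf (inf f1 f2) d \<le> n2" using \<open>inf f2 d \<le> n2\<close> by (rule order_trans)
    qed
    finally have "f \<le> sup n1 n2" .
    moreover have "sup n1 n2 \<in> N" using \<open>n1 \<in> N\<close> \<open>n2 \<in> N\<close> unfolding N_def by (rule jsup)
    ultimately show False using disj \<open>f \<in> F\<close> by blast
  qed
  have "bot \<notin> F" using disj jbot N_def by blast
  then have "F \<noteq> UNIV" by blast
  then have "prime_filter F" unfolding prime_filter_def using filt prime by blast
  moreover have "F \<inter> joins I = {}" using disj N_def by blast
  ultimately show ?thesis using JF by blast
qed

lemma meets_ge: "m \<in> meets {a} \<Longrightarrow> a \<le> m"
  by (induction rule: meets.induct) auto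
lemma joins_le: "n \<in> joins {b} \<Longrightarrow> n \<le> b"
  by (induction rule: joins.induct) auto

lemma pft:
  fixes a b :: "'a::{bounded_lattice,distrib_lattice}"
  assumes "\<not> a \<le> b"
  shows "\<exists>x. prime_filter x \<and> a \<in> x \<and> b \<notin> x"
proof -
  have "\<forall>m\<in>meets {a}. \<forall>n\<in>joins {b}. \<not> m \<le> n"
  proof (intro ballI notI)
    fix m n assume "m \<in> meets {a}" "n \<in> joins {b}" "m \<le> n"
    then have "a \<le> m" "n \<le> b" using meets_ge joins_le by auto
    then have "a \<le> b" using \<open>m \<le> n\<close> by (meson order_trans)
    then show False using assms by simp
  qed
  from pft_general[OF this] obtain x where "prime_filter x" "{a} \<subseteq> x" "x \<inter> joins {b} = {}" by blast
  then show ?thesis using jI[of b "{b}"] by blast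
qed


abbreviation PT :: "'a::{bounded_lattice,distrib_lattice} set topology" where "PT \<equiv> priestley_top"
abbreviation PF :: "'a::{bounded_lattice,distrib_lattice} set set" where "PF \<equiv> prime_filters"

lemma s_mem: "x \<in> stone_map a \<longleftrightarrow> prime_filter x \<and> a \<in> x"
  unfolding stone_map_def prime_filters_def by simp
lemma PF_mem: "x \<in> prime_filters \<longleftrightarrow> prime_filter x"
  unfolding prime_filters_def by simp

lemma topspace_PT: "topspace (priestley_top :: 'a::{bounded_lattice,distrib_lattice} set topology) = prime_filters"
proof -
  have "\<Union>{stone_map a - stone_map b | a b::'a. True} = prime_filters"
  proof
    show "\<Union>{stone_map a - stone_map b | a b::'a. True} \<subseteq> prime_filters"
      unfolding stone_map_def by blast
    show "prime_filters \<subseteq> \<Union>{stone_map a - stone_map b | a b::'a. True}"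
    proof
      fix x :: "'a set" assume "x \<in> prime_filters"
      then have "x \<in> stone_map top - stone_map bot" using pf_top pf_bot by (auto simp: s_mem PF_mem)
      then show "x \<in> \<Union>{stone_map a - stone_map b | a b::'a. True}" by blast
    qed
  qed
  then show ?thesis unfolding priestley_top_def by simp
qed

lemma open_basic: "openin priestley_top (stone_map a - stone_map b)"
  unfolding priestley_top_def by (rule topology_generated_by_Basis) blast

lemma open_s: "openin priestley_top (stone_map a)"
proof -
  have "stone_map a = stone_map a - stone_map bot" by (auto simp: s_mem dest: pf_bot)
  then show ?thesis using open_basic by metis
qed

lemma open_cs: "openin priestley_top (prime_filters - stone_map a)"
proof -
  have "prime_filters - stone_map a = stone_map top - stone_map a" using pf_top by (auto simp: s_mem PF_mem)
  then show ?thesis using open_basic by metis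
qed

lemma s_sub: "stone_map a \<subseteq> prime_filters" by (auto simp: s_mem PF_mem)

lemma closed_s: "closedin priestley_top (stone_map a)"
  unfolding closedin_def topspace_PT using s_sub open_cs by blast

lemma clopen_s: "clopen_upset (stone_map a)"
  unfolding clopen_upset_def is_upset_def using open_s closed_s s_sub
  by (auto simp: s_mem PF_mem)

lemma s_le: assumes "stone_map a \<subseteq> stone_map b" shows "a \<le> b"
proof (rule ccontr)
  assume "\<not> a \<le> b"
  then obtain x where "prime_filter x" "a \<in> x" "b \<notin> x" using pft by blast
  then show False using assms by (auto simp: s_mem)
qed

lemma basic_nbhd:
  assumes "openin priestley_top T" "x \<in> T"
  shows "\<exists>c d. x \<in> stone_map c - stone_map d \<and> stone_map c - stone_map d \<subseteq> T"
proof -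
  have "generate_topology_on {stone_map a - stone_map b | a b. True} T"
    using assms(1) unfolding priestley_top_def by (rule openin_topology_generated_by)
  then show ?thesis using assms(2)
  proof (induction arbitrary: x)
    case Empty then show ?case by simp
  next
    case (Int a b)
    then obtain c1 d1 c2 d2 where 1: "x \<in> stone_map c1 - stone_map d1" "stone_map c1 - stone_map d1 \<subseteq> a"
      and 2: "x \<in> stone_map c2 - stone_map d2" "stone_map c2 - stone_map d2 \<subseteq> b" by (meson IntD1 IntD2)
    have "x \<in> stone_map (inf c1 c2) - stone_map (sup d1 d2)"
      using 1 2 by (auto simp: s_mem pf_inf pf_sup)
    moreover have "stone_map (inf c1 c2) - stone_map (sup d1 d2) \<subseteq> stone_map c1 - stone_map d1"
      by (auto simp: s_mem pf_inf pf_sup)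
    moreover have "stone_map (inf c1 c2) - stone_map (sup d1 d2) \<subseteq> stone_map c2 - stone_map d2"
      by (auto simp: s_mem pf_inf pf_sup)
    ultimately show ?case using 1(2) 2(2) by blast
  next
    case (UN K)
    then obtain k where "k \<in> K" "x \<in> k" by blast
    then show ?case using UN.IH by blast
  next
    case (Basis s)
    then show ?case by blast
  qed
qed

lemma meets_fin: "m \<in> meets J \<Longrightarrow> \<exists>J0. finite J0 \<and> J0 \<subseteq> J \<and> (\<forall>x. prime_filter x \<longrightarrow> J0 \<subseteq> x \<longrightarrow> m \<in> x)"
proof (induction rule: meets.induct)
  case mtop then show ?case using pf_top by (intro exI[of _ "{}"]) auto
next
  case (mJ b) then show ?case by (intro exI[of _ "{b}"]) auto
next
  case (minf m1 m2)
  then obtain A B where "finite A" "A \<subseteq> J" "\<forall>x. prime_filter x \<longrightarrow> A \<subseteq> x \<longrightarrow> m1 \<in> x"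
    "finite B" "B \<subseteq> J" "\<forall>x. prime_filter x \<longrightarrow> B \<subseteq> x \<longrightarrow> m2 \<in> x" by blast
  then show ?case by (intro exI[of _ "A \<union> B"]) (auto simp: pf_inf)
qed

lemma joins_fin: "n \<in> joins I \<Longrightarrow> \<exists>I0. finite I0 \<and> I0 \<subseteq> I \<and> (\<forall>x. prime_filter x \<longrightarrow> n \<in> x \<longrightarrow> I0 \<inter> x \<noteq> {})"
proof (induction rule: joins.induct)
  case jbot then show ?case using pf_bot by (intro exI[of _ "{}"]) auto
next
  case (jI a) then show ?case by (intro exI[of _ "{a}"]) auto
next
  case (jsup n1 n2)
  then obtain A B where "finite A" "A \<subseteq> I" "\<forall>x. prime_filter x \<longrightarrow> n1 \<in> x \<longrightarrow> A \<inter> x \<noteq> {}"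
    "finite B" "B \<subseteq> I" "\<forall>x. prime_filter x \<longrightarrow> n2 \<in> x \<longrightarrow> B \<inter> x \<noteq> {}" by blast
  then show ?case by (intro exI[of _ "A \<union> B"]) (auto simp: pf_sup)
qed


lemma PT_subbase:
  "topology (arbitrary union_of (finite intersection_of (\<lambda>x. x \<in> (range stone_map \<union> {prime_filters - stone_map b | b. True})) relative_to prime_filters))
   = (priestley_top :: 'a::{bounded_lattice,distrib_lattice} set topology)"
  (is "topology ?T = _")
proof -
  let ?B = "range stone_map \<union> {prime_filters - stone_map b | b::'a. True}"
  have Bopen: "openin priestley_top u" if "u \<in> ?B" for u
    using that open_s open_cs by blast
  have "openin (topology ?T) S \<longleftrightarrow> openin priestley_top S" for S
  proof
    assume "openin (topology ?T) S"
    then have "?T S" by (simp add: openin_subbase)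
    then obtain \<U> where U: "S = \<Union>\<U>" and Ui: "\<And>u. u \<in> \<U> \<Longrightarrow> (finite intersection_of (\<lambda>x. x \<in> ?B) relative_to prime_filters) u"
      unfolding union_of_def arbitrary_def by blast
    have "openin priestley_top u" if "u \<in> \<U>" for u
    proof -
      obtain V where "(finite intersection_of (\<lambda>x. x \<in> ?B)) V" "prime_filters \<inter> V = u"
        using Ui[OF \<open>u \<in> \<U>\<close>] unfolding relative_to_def by blast
      then obtain F where F: "finite F" "F \<subseteq> ?B" "\<Inter>F = V" "prime_filters \<inter> V = u"
        unfolding intersection_of_def by blast
      have "openin priestley_top (prime_filters \<inter> \<Inter>F)" using F(1,2)
      proof (induction F rule: finite_induct)
        case empty then show ?case using openin_topspace[of priestley_top] by (simp add: topspace_PT)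
      next
        case (insert b F)
        from insert.prems have "b \<in> ?B" by simp
        then have "openin priestley_top b" by (rule Bopen)
        moreover have "openin priestley_top (prime_filters \<inter> \<Inter>F)" using insert.IH insert.prems by simp
        ultimately have "openin priestley_top (b \<inter> (prime_filters \<inter> \<Inter>F))" by blast
        moreover have "b \<inter> (prime_filters \<inter> \<Inter>F) = prime_filters \<inter> \<Inter>(insert b F)" by auto
        ultimately show ?case by simp
      qed
      then show ?thesis using F by simp
    qed
    then show "openin priestley_top S" using U by blast
  next
    assume "openin priestley_top S"
    then have "generate_topology_on {stone_map a - stone_map b | a b. True} S"
      unfolding priestley_top_def by (rule openin_topology_generated_by)
    then show "openin (topology ?T) S"
    proof induction
      case Empty then show ?case by simp
    next
      case (Int a b) then show ?case by blast
    next
      case (UN K) then show ?case by blast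
    next
      case (Basis s)
      then obtain a b where s: "s = stone_map a - stone_map b" by blast
      have inc: "openin (topology ?T) u" if "u \<in> ?B" for u
      proof -
        have "u \<subseteq> prime_filters" using that s_sub by blast
        have "(finite intersection_of (\<lambda>x. x \<in> ?B)) u" using that by (simp add: finite_intersection_of_inc)
        then have "(finite intersection_of (\<lambda>x. x \<in> ?B) relative_to prime_filters) u"
          unfolding relative_to_def using \<open>u \<subseteq> prime_filters\<close> by blast
        then show ?thesis by (simp add: openin_subbase arbitrary_union_of_inc)
      qed
      have "openin (topology ?T) (stone_map a)" by (rule inc) blast
      moreover have "openin (topology ?T) (prime_filters - stone_map b)" by (rule inc) blast
      ultimately have "openin (topology ?T) (stone_map a \<inter> (prime_filters - stone_map b))" by blast
      moreover have "stone_map a \<inter> (prime_filters - stone_map b) = s" using s s_sub by blast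
      ultimately show ?case by simp
    qed
  qed
  then show ?thesis by (simp add: topology_eq)
qed



lemma compact_PT: "compact_space (priestley_top :: 'a::{bounded_lattice,distrib_lattice} set topology)"
proof (rule Alexander_subbase_alt[OF _ _ PT_subbase])
  have "prime_filters \<subseteq> stone_map (top::'a)" using pf_top by (auto simp: s_mem PF_mem)
  moreover have "stone_map (top::'a) \<in> range stone_map \<union> {prime_filters - stone_map b | b::'a. True}" by simp
  ultimately show "prime_filters \<subseteq> \<Union>(range stone_map \<union> {prime_filters - stone_map b | b::'a. True})"
    by (meson Union_upper subset_trans)
next
  fix C assume CB: "C \<subseteq> range stone_map \<union> {prime_filters - stone_map b | b::'a. True}"
    and cov: "prime_filters \<subseteq> \<Union>C"
  define I where "I = {a. stone_map a \<in> C}"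
  define J where "J = {b. prime_filters - stone_map b \<in> C}"
  show "\<exists>C'. finite C' \<and> C' \<subseteq> C \<and> prime_filters \<subseteq> \<Union>C'"
  proof (cases "\<exists>m\<in>meets J. \<exists>n\<in>joins I. m \<le> n")
    case True
    then obtain m n where mn: "m \<in> meets J" "n \<in> joins I" "m \<le> n" by blast
    from meets_fin[OF mn(1)] obtain J0 where J0: "finite J0" "J0 \<subseteq> J" "\<forall>x. prime_filter x \<longrightarrow> J0 \<subseteq> x \<longrightarrow> m \<in> x"
      by (elim exE conjE)
    from joins_fin[OF mn(2)] obtain I0 where I0: "finite I0" "I0 \<subseteq> I" "\<forall>x. prime_filter x \<longrightarrow> n \<in> x \<longrightarrow> I0 \<inter> x \<noteq> {}"
      by (elim exE conjE)
    define C' where "C' = (\<lambda>b. prime_filters - stone_map b) ` J0 \<union> stone_map ` I0"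
    have fC: "finite C'" unfolding C'_def using J0(1) I0(1) by blast
    have "(\<lambda>b. prime_filters - stone_map b) ` J0 \<subseteq> C" using J0(2) unfolding J_def by blast
    moreover have "stone_map ` I0 \<subseteq> C" using I0(2) unfolding I_def by blast
    ultimately have sC: "C' \<subseteq> C" unfolding C'_def by (rule Un_least)
    have cC: "prime_filters \<subseteq> \<Union>C'"
    proof
      fix x :: "'a set" assume x: "x \<in> prime_filters"
      show "x \<in> \<Union>C'"
      proof (cases "J0 \<subseteq> x")
        case True
        have px: "prime_filter x" using x by (simp add: PF_mem)
        then have "m \<in> x" using J0(3) True by blast
        then have "n \<in> x" using pf_up[OF px _ mn(3)] by blast
        then have "I0 \<inter> x \<noteq> {}" using I0(3) px by blast
        then obtain a where "a \<in> I0" "a \<in> x" by blast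
        then have "x \<in> stone_map a" using px by (simp add: s_mem)
        moreover have "stone_map a \<in> C'" unfolding C'_def using \<open>a \<in> I0\<close> by blast
        ultimately show ?thesis by blast
      next
        case False
        then obtain b where "b \<in> J0" "b \<notin> x" by blast
        then have "x \<in> prime_filters - stone_map b" using x by (simp add: s_mem)
        moreover have "prime_filters - stone_map b \<in> C'" unfolding C'_def using \<open>b \<in> J0\<close> by blast
        ultimately show ?thesis by blast
      qed
    qed
    show ?thesis using fC sC cC by blast
  next
    case False
    then obtain x where x: "prime_filter x" "J \<subseteq> x" "x \<inter> joins I = {}"
      using pft_general[of J I] by blast
    then have "x \<in> prime_filters" by (simp add: PF_mem)
    then obtain c where "c \<in> C" "x \<in> c" using cov by blast
    then have "c \<in> range stone_map \<or> c \<in> {prime_filters - stone_map b | b::'a. True}" using CB by blast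
    then have False
    proof
      assume "c \<in> range stone_map"
      then obtain a where "c = stone_map a" by blast
      then have "a \<in> I" "a \<in> x" using \<open>c \<in> C\<close> \<open>x \<in> c\<close> unfolding I_def by (auto simp: s_mem)
      then show False using x(3) jI[of a I] by blast
    next
      assume "c \<in> {prime_filters - stone_map b | b::'a. True}"
      then obtain b where "c = prime_filters - stone_map b" by blast
      then have "b \<in> J" "b \<notin> x" using \<open>c \<in> C\<close> \<open>x \<in> c\<close> x(1) unfolding J_def by (auto simp: s_mem)
      then show False using x(2) by blast
    qed
    then show ?thesis by blast
  qed
qed


lemma fin_join:
  fixes h :: "'k \<Rightarrow> 'a::{bounded_lattice,distrib_lattice}"
  assumes "finite K" "prime_filter y" "\<forall>k\<in>K. h k \<notin> y"
  shows "\<exists>a. a \<notin> y \<and> (\<forall>k\<in>K. h k \<le> a)"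
  using assms
proof (induction K rule: finite_induct)
  case empty then show ?case using pf_bot by blast
next
  case (insert k K)
  then obtain a where a: "a \<notin> y" "\<forall>k\<in>K. h k \<le> a" by blast
  have "sup a (h k) \<notin> y" using a(1) insert.prems pf_sup by blast
  moreover have "\<forall>k'\<in>insert k K. h k' \<le> sup a (h k)" using a(2) by (auto intro: le_supI1)
  ultimately show ?case by blast
qed

lemma fin_meet:
  fixes h :: "'k \<Rightarrow> 'a::{bounded_lattice,distrib_lattice}"
  assumes "finite K"
  shows "\<exists>b. (\<forall>k\<in>K. b \<le> h k) \<and> (\<forall>x. prime_filter x \<longrightarrow> (\<forall>k\<in>K. h k \<in> x) \<longrightarrow> b \<in> x)"
  using assms
proof (induction K rule: finite_induct)
  case empty then show ?case using pf_top by blast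
next
  case (insert k K)
  then obtain b where b: "\<forall>k\<in>K. b \<le> h k" "\<forall>x. prime_filter x \<longrightarrow> (\<forall>k\<in>K. h k \<in> x) \<longrightarrow> b \<in> x" by blast
  have "\<forall>k'\<in>insert k K. inf b (h k) \<le> h k'" using b(1) by (auto intro: le_infI1)
  moreover have "\<forall>x. prime_filter x \<longrightarrow> (\<forall>k'\<in>insert k K. h k' \<in> x) \<longrightarrow> inf b (h k) \<in> x"
    using b(2) pf_inf by blast
  ultimately show ?case by blast
qed

lemma compactin_cover:
  assumes "compactin X S" "\<forall>U\<in>\<U>. openin X U" "S \<subseteq> \<Union>\<U>"
  shows "\<exists>F. finite F \<and> F \<subseteq> \<U> \<and> S \<subseteq> \<Union>F"
  using assms unfolding compactin_def by blast

lemma clopen_upset_s: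
  fixes V :: "'a::{bounded_lattice,distrib_lattice} set set"
  assumes "clopen_upset V"
  shows "\<exists>a. V = stone_map a"
proof -
  have op: "openin priestley_top V" and cl: "closedin priestley_top V" and up: "is_upset V"
    using assms unfolding clopen_upset_def by simp_all
  have VX: "V \<subseteq> prime_filters" using closedin_subset[OF cl] topspace_PT by blast
  have stepA: "\<exists>a. V \<subseteq> stone_map a \<and> a \<notin> y" if y: "y \<in> prime_filters - V" for y :: "'a set"
  proof -
    have ex: "\<exists>a. a \<in> x \<and> a \<notin> y" if "x \<in> V" for x
    proof (rule ccontr)
      assume "\<not> (\<exists>a. a \<in> x \<and> a \<notin> y)"
      then have "x \<subseteq> y" by blast
      then have "y \<in> V" using up that y unfolding is_upset_def by blast
      then show False using y by blast
    qed
    obtain g where g: "\<forall>x\<in>V. g x \<in> x \<and> g x \<notin> y" using ex by metis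
    have "compactin priestley_top V" by (rule closedin_compact_space[OF compact_PT cl])
    moreover have "\<forall>u\<in>(\<lambda>x. stone_map (g x)) ` V. openin priestley_top u" using open_s by blast
    moreover have "V \<subseteq> \<Union>((\<lambda>x. stone_map (g x)) ` V)"
    proof
      fix x assume "x \<in> V"
      then have "x \<in> stone_map (g x)" using g VX by (auto simp: s_mem PF_mem)
      then show "x \<in> \<Union>((\<lambda>x. stone_map (g x)) ` V)" using \<open>x \<in> V\<close> by blast
    qed
    ultimately obtain F where F: "finite F" "F \<subseteq> (\<lambda>x. stone_map (g x)) ` V" "V \<subseteq> \<Union>F"
      using compactin_cover by (metis (no_types, lifting))
    obtain V0 where V0: "V0 \<subseteq> V" "finite V0" "F = (\<lambda>x. stone_map (g x)) ` V0"
      using finite_subset_image[OF F(1) F(2)] by blast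
    have py: "prime_filter y" using y by (simp add: PF_mem)
    have "\<forall>k\<in>V0. g k \<notin> y" using g V0(1) by blast
    then obtain a where a: "a \<notin> y" "\<forall>k\<in>V0. g k \<le> a" using fin_join[OF V0(2) py] by blast
    have "V \<subseteq> stone_map a"
    proof
      fix z assume "z \<in> V"
      then obtain k where "k \<in> V0" "z \<in> stone_map (g k)" using F(3) V0(3) by blast
      then have pz: "prime_filter z" and "g k \<in> z" by (auto simp: s_mem)
      have "g k \<le> a" using a(2) \<open>k \<in> V0\<close> by blast
      then have "a \<in> z" using pf_up[OF pz \<open>g k \<in> z\<close>] by blast
      then show "z \<in> stone_map a" using pz by (simp add: s_mem)
    qed
    then show ?thesis using a(1) by blast
  qed
  obtain h where h: "\<forall>y\<in>prime_filters - V. V \<subseteq> stone_map (h y) \<and> h y \<notin> y" using stepA by metis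
  have "closedin priestley_top (prime_filters - V)"
    using closedin_diff[OF closedin_topspace op] by (simp add: topspace_PT)
  then have "compactin priestley_top (prime_filters - V)" by (rule closedin_compact_space[OF compact_PT])
  moreover have "\<forall>u\<in>(\<lambda>y. prime_filters - stone_map (h y)) ` (prime_filters - V). openin priestley_top u"
    using open_cs by blast
  moreover have "prime_filters - V \<subseteq> \<Union>((\<lambda>y. prime_filters - stone_map (h y)) ` (prime_filters - V))"
  proof
    fix y :: "'a set" assume "y \<in> prime_filters - V"
    then have "y \<in> prime_filters - stone_map (h y)" using h by (auto simp: s_mem)
    then show "y \<in> \<Union>((\<lambda>y. prime_filters - stone_map (h y)) ` (prime_filters - V))"
      using \<open>y \<in> prime_filters - V\<close> by blast
  qed
  ultimately obtain F where F: "finite F" "F \<subseteq> (\<lambda>y. prime_filters - stone_map (h y)) ` (prime_filters - V)"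
      "prime_filters - V \<subseteq> \<Union>F"
    using compactin_cover by (metis (no_types, lifting))
  obtain Y0 where Y0: "Y0 \<subseteq> prime_filters - V" "finite Y0" "F = (\<lambda>y. prime_filters - stone_map (h y)) ` Y0"
    using finite_subset_image[OF F(1) F(2)] by blast
  obtain b where b: "\<forall>k\<in>Y0. b \<le> h k" "\<forall>x. prime_filter x \<longrightarrow> (\<forall>k\<in>Y0. h k \<in> x) \<longrightarrow> b \<in> x"
    using fin_meet[OF Y0(2), of h] by blast
  have "V = stone_map b"
  proof
    show "V \<subseteq> stone_map b"
    proof
      fix x assume "x \<in> V"
      then have px: "prime_filter x" using VX by (auto simp: PF_mem)
      have "\<forall>k\<in>Y0. h k \<in> x"
      proof
        fix k assume "k \<in> Y0"
        then have "k \<in> prime_filters - V" using Y0(1) by blast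
        then have "V \<subseteq> stone_map (h k)" using h by blast
        then show "h k \<in> x" using \<open>x \<in> V\<close> by (auto simp: s_mem)
      qed
      then show "x \<in> stone_map b" using b(2) px by (simp add: s_mem)
    qed
  next
    show "stone_map b \<subseteq> V"
    proof
      fix z assume z: "z \<in> stone_map b"
      show "z \<in> V"
      proof (rule ccontr)
        assume "z \<notin> V"
        then have "z \<in> prime_filters - V" using z by (auto simp: s_mem PF_mem)
        then obtain k where "k \<in> Y0" "z \<in> prime_filters - stone_map (h k)" using F(3) Y0(3) by blast
        moreover have "h k \<in> z"
        proof -
          have pz: "prime_filter z" and "b \<in> z" using z by (auto simp: s_mem)
          have "b \<le> h k" using b(1) \<open>k \<in> Y0\<close> by blast
          then show ?thesis using pf_up[OF pz \<open>b \<in> z\<close>] by blast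
        qed
        ultimately show False by (auto simp: s_mem PF_mem)
      qed
    qed
  qed
  then show ?thesis by blast
qed


lemma card_img_less: "(card_of A, \<kappa>) \<in> ordLess \<Longrightarrow> (card_of (f ` A), \<kappa>) \<in> ordLess"
  using card_of_image[of f A] ordLeq_ordLess_trans by blast

theorem theorem5p18:
  fixes \<kappa> :: "'b rel"
  assumes "Card_order \<kappa>" and "infinite (Field \<kappa>)" and "regularCard \<kappa>"
  shows "kappa_frame \<kappa> TYPE('a::{bounded_lattice,distrib_lattice}) \<longleftrightarrow>
         (\<forall>U::'a set set. kappa_clopen_upset \<kappa> U \<longrightarrow>
            clopen_upset (priestley_top closure_of U))"
proof
  assume kf: "kappa_frame \<kappa> TYPE('a)"
  show "\<forall>U::'a set set. kappa_clopen_upset \<kappa> U \<longrightarrow> clopen_upset (priestley_top closure_of U)"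
  proof (intro allI impI)
    fix U :: "'a set set" assume "kappa_clopen_upset \<kappa> U"
    then obtain \<U> where cU: "(card_of \<U>, \<kappa>) \<in> ordLess" "\<forall>V\<in>\<U>. clopen_upset V" "U = \<Union>\<U>"
      unfolding kappa_clopen_upset_def by blast
    have "\<forall>V\<in>\<U>. \<exists>a. V = stone_map a" using cU(2) clopen_upset_s by blast
    then obtain f where f: "\<forall>V\<in>\<U>. V = stone_map (f V)" by metis
    define S where "S = f ` \<U>"
    have cS: "(card_of S, \<kappa>) \<in> ordLess" unfolding S_def by (rule card_img_less[OF cU(1)])
    have kfS: "(\<exists>j. is_join S j) \<and> (\<forall>a j. is_join S j \<longrightarrow> is_join ((\<lambda>s. inf a s) ` S) (inf a j))"
      using kf cS unfolding kappa_frame_def by blast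
    then obtain j where j: "is_join S j" by blast
    have USj: "U \<subseteq> stone_map j"
    proof
      fix y assume "y \<in> U"
      then obtain V where "V \<in> \<U>" "y \<in> V" using cU(3) by blast
      then have "y \<in> stone_map (f V)" using f by blast
      then have py: "prime_filter y" and "f V \<in> y" by (auto simp: s_mem)
      have "f V \<le> j" using j \<open>V \<in> \<U>\<close> unfolding is_join_def S_def by blast
      then have "j \<in> y" using pf_up[OF py \<open>f V \<in> y\<close>] by blast
      then show "y \<in> stone_map j" using py by (simp add: s_mem)
    qed
    have eq: "priestley_top closure_of U = stone_map j"
    proof
      show "priestley_top closure_of U \<subseteq> stone_map j"
        using closure_of_minimal[OF USj closed_s] .
    next
      show "stone_map j \<subseteq> priestley_top closure_of U"
      proof
        fix x assume x: "x \<in> stone_map j"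
        then have px: "prime_filter x" and jx: "j \<in> x" by (auto simp: s_mem)
        have "\<exists>y. y \<in> U \<and> y \<in> T" if T: "x \<in> T" "openin priestley_top T" for T
        proof (rule ccontr)
          assume none: "\<not> (\<exists>y. y \<in> U \<and> y \<in> T)"
          obtain c d where cd: "x \<in> stone_map c - stone_map d" "stone_map c - stone_map d \<subseteq> T"
            using basic_nbhd[OF T(2) T(1)] by blast
          have ub: "\<forall>t\<in>(\<lambda>s. inf c s) ` S. t \<le> d"
          proof
            fix t assume "t \<in> (\<lambda>s. inf c s) ` S"
            then obtain V where V: "V \<in> \<U>" "t = inf c (f V)" unfolding S_def by blast
            have "stone_map t \<subseteq> stone_map d"
            proof
              fix y assume "y \<in> stone_map t"
              then have py: "prime_filter y" and "c \<in> y" "f V \<in> y" using V(2) by (auto simp: s_mem pf_inf)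
              then have "y \<in> stone_map (f V)" by (simp add: s_mem)
              moreover have "V = stone_map (f V)" using f V(1) by (rule bspec)
              ultimately have "y \<in> V" by metis
              then have "y \<in> U" using cU(3) V(1) by blast
              show "y \<in> stone_map d"
              proof (rule ccontr)
                assume "y \<notin> stone_map d"
                then have "y \<in> T" using cd(2) py \<open>c \<in> y\<close> by (auto simp: s_mem)
                then show False using none \<open>y \<in> U\<close> by blast
              qed
            qed
            then show "t \<le> d" by (rule s_le)
          qed
          have "is_join ((\<lambda>s. inf c s) ` S) (inf c j)" using kfS j by blast
          then have "inf c j \<le> d" using ub unfolding is_join_def by blast
          moreover have "inf c j \<in> x" using cd(1) jx px by (auto simp: s_mem pf_inf)
          ultimately have "d \<in> x" using pf_up[OF px] by blast
          then show False using cd(1) by (auto simp: s_mem)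
        qed
        moreover have "x \<in> topspace priestley_top" using x s_sub topspace_PT by blast
        ultimately show "x \<in> priestley_top closure_of U" unfolding in_closure_of by blast
      qed
    qed
    show "clopen_upset (priestley_top closure_of U)" unfolding eq by (rule clopen_s)
  qed
next
  assume R: "\<forall>U::'a set set. kappa_clopen_upset \<kappa> U \<longrightarrow> clopen_upset (priestley_top closure_of U)"
  show "kappa_frame \<kappa> TYPE('a)" unfolding kappa_frame_def
  proof (intro allI impI)
    fix S :: "'a set" assume cS: "(card_of S, \<kappa>) \<in> ordLess"
    define U where "U = \<Union>(stone_map ` S)"
    have "kappa_clopen_upset \<kappa> U" unfolding kappa_clopen_upset_def
    proof (intro exI conjI)
      show "(card_of (stone_map ` S), \<kappa>) \<in> ordLess" by (rule card_img_less[OF cS])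
      show "\<forall>V\<in>stone_map ` S. clopen_upset V" using clopen_s by blast
      show "U = \<Union>(stone_map ` S)" by (rule U_def)
    qed
    then have "clopen_upset (priestley_top closure_of U)" using R by blast
    then obtain j where j: "priestley_top closure_of U = stone_map j" using clopen_upset_s by blast
    have Usub: "U \<subseteq> topspace priestley_top" unfolding U_def topspace_PT using s_sub by blast
    have ub: "a \<le> j" if "a \<in> S" for a
    proof -
      have "stone_map a \<subseteq> U" unfolding U_def using that by blast
      also have "\<dots> \<subseteq> priestley_top closure_of U" by (rule closure_of_subset[OF Usub])
      finally show ?thesis unfolding j by (rule s_le)
    qed
    have least: "j \<le> u" if "\<forall>a\<in>S. a \<le> u" for u
    proof -
      have "U \<subseteq> stone_map u"
      proof
        fix y assume "y \<in> U"
        then obtain a where "a \<in> S" "y \<in> stone_map a" unfolding U_def by blast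
        then have py: "prime_filter y" and "a \<in> y" by (auto simp: s_mem)
        have "a \<le> u" using that \<open>a \<in> S\<close> by blast
        then have "u \<in> y" using pf_up[OF py \<open>a \<in> y\<close>] by blast
        then show "y \<in> stone_map u" using py by (simp add: s_mem)
      qed
      then have "priestley_top closure_of U \<subseteq> stone_map u" using closure_of_minimal closed_s by blast
      then show ?thesis unfolding j by (rule s_le)
    qed
    have isj: "is_join S j" unfolding is_join_def using ub least by blast
    show "(\<exists>j. is_join S j) \<and> (\<forall>a j'. is_join S j' \<longrightarrow> is_join ((\<lambda>s. inf a s) ` S) (inf a j'))"
    proof (intro conjI allI impI)
      show "\<exists>j. is_join S j" using isj by blast
    next
      fix a j' assume "is_join S j'"
      then have "j' \<le> j" "j \<le> j'" using isj unfolding is_join_def by blast+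
      then have "j' = j" by (rule antisym)
      show "is_join ((\<lambda>s. inf a s) ` S) (inf a j')" unfolding is_join_def \<open>j' = j\<close>
      proof (intro conjI allI impI ballI)
        fix t assume "t \<in> (\<lambda>s. inf a s) ` S"
        then obtain s where "s \<in> S" "t = inf a s" by blast
        then show "t \<le> inf a j" using ub[OF \<open>s \<in> S\<close>] by (simp add: le_infI2)
      next
        fix u assume H: "\<forall>t\<in>(\<lambda>s. inf a s) ` S. t \<le> u"
        show "inf a j \<le> u"
        proof (rule ccontr)
          assume "\<not> inf a j \<le> u"
          then obtain x where px: "prime_filter x" and ajx: "inf a j \<in> x" and ux: "u \<notin> x" using pft by blast
          have "x \<in> stone_map a - stone_map u" using px ajx ux by (auto simp: s_mem pf_inf)
          moreover have "x \<in> priestley_top closure_of U" unfolding j using px ajx by (auto simp: s_mem pf_inf)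
          ultimately obtain y where "y \<in> U" "y \<in> stone_map a - stone_map u"
            using open_basic unfolding in_closure_of by blast
          then obtain s where "s \<in> S" "y \<in> stone_map s" unfolding U_def by blast
          then have py: "prime_filter y" and "s \<in> y" by (auto simp: s_mem)
          have "a \<in> y" "u \<notin> y" using \<open>y \<in> stone_map a - stone_map u\<close> by (auto simp: s_mem)
          then have "inf a s \<in> y" using \<open>s \<in> y\<close> py pf_inf by blast
          moreover have "inf a s \<le> u" using H \<open>s \<in> S\<close> by blast
          ultimately have "u \<in> y" using pf_up[OF py] by blast
          then show False using \<open>u \<notin> y\<close> by blast
        qed
      qed
    qed
  qed
qed


end
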